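(* Let $\psi:(0,1]\to(0,\infty)$ with $\psi(1)=1$, $\lim_{r\to0+}\psi(r)=0$ and $I_\psi\subset(1,2)$, and let $f\in C^\psi(\mathbb{R}^d)$. Then there exists a constant $C=C(\psi)$ such that for every $i=1,\dots,d$, $$[D_if]_{C^{-1;\psi}}\le C\big(\|f\|_{C^0}+[[f]]_{C^\psi}\big).$$
   Context: $g:(0,1]\to(0,\infty)$ is almost increasing if $c\,g(r)\le g(R)$ for some $c\in(0,1]$ and all $0<r\le R\le1$, almost decreasing if $g(R)\le Cg(r)$ for some $C\ge1$ and all $0<r\le R\le1$. $M_\psi=\inf\{\alpha: \psi(r)/r^\alpha\text{ almost decreasing}\}$, $m_\psi=\sup\{\alpha: \psi(r)/r^\alpha\text{ almost increasing}\}$, $I_\psi=[m_\psi,M_\psi]$. $\|f\|_{C^0}=\sup|f|$; $D_if$ is the $i$-th partial derivative. $[g]_{C^{-1;\psi}}=\sup_x\sup_{0<|h|\le1}\frac{|g(x+h)-g(x)|}{\psi(|h|)|h|^{-1}}$; $[[f]]_{C^\psi}=\sup_x\sup_{0<|h|\le1}\frac{|f(x+h)-2f(x)+f(x-h)|}{\psi(|h|)}$. When $m_\psi\in(1,2]$, $C^\psi(\mathbb{R}^d)$ is the set of continuous $f$ with $f$ and all first partials bounded continuous and $[D_if]_{C^{-1;\psi}}<\infty$ for all $i$. *)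

theory Defs
  imports "HOL-Analysis.Analysis"
begin

definition almost_increasing :: "(real \<Rightarrow> real) \<Rightarrow> bool" where
  "almost_increasing g \<longleftrightarrow>
     (\<exists>c. 0 < c \<and> c \<le> 1 \<and> (\<forall>r R. 0 < r \<and> r \<le> R \<and> R \<le> 1 \<longrightarrow> c * g r \<le> g R))"

definition almost_decreasing :: "(real \<Rightarrow> real) \<Rightarrow> bool" where
  "almost_decreasing g \<longleftrightarrow>
     (\<exists>C. 1 \<le> C \<and> (\<forall>r R. 0 < r \<and> r \<le> R \<and> R \<le> 1 \<longrightarrow> g R \<le> C * g r))"

text \<open>Upper/lower indices, valued in the extended reals (Inf of the empty set is +infinity,
  Sup of the empty set is -infinity).\<close>
definition upper_index :: "(real \<Rightarrow> real) \<Rightarrow> ereal" where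
  "upper_index \<psi> = Inf {ereal \<alpha> | \<alpha>. almost_decreasing (\<lambda>r. \<psi> r / r powr \<alpha>)}"

definition lower_index :: "(real \<Rightarrow> real) \<Rightarrow> ereal" where
  "lower_index \<psi> = Sup {ereal \<alpha> | \<alpha>. almost_increasing (\<lambda>r. \<psi> r / r powr \<alpha>)}"

definition index_interval :: "(real \<Rightarrow> real) \<Rightarrow> ereal set" where
  "index_interval \<psi> = {lower_index \<psi> .. upper_index \<psi>}"

definition partial :: "('a::euclidean_space \<Rightarrow> real) \<Rightarrow> 'a \<Rightarrow> 'a \<Rightarrow> real" where
  "partial f i x = deriv (\<lambda>t. f (x + t *\<^sub>R i)) 0"

definition sup_norm :: "('a::euclidean_space \<Rightarrow> real) \<Rightarrow> real" where
  "sup_norm f = (SUP x. \<bar>f x\<bar>)"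

definition neg_seminorm :: "(real \<Rightarrow> real) \<Rightarrow> ('a::euclidean_space \<Rightarrow> real) \<Rightarrow> ereal" where
  "neg_seminorm \<psi> g = (SUP p \<in> {(x, h). 0 < norm h \<and> norm h \<le> 1}.
      ereal (\<bar>g (fst p + snd p) - g (fst p)\<bar> / (\<psi> (norm (snd p)) * inverse (norm (snd p)))))"

definition second_diff_seminorm :: "(real \<Rightarrow> real) \<Rightarrow> ('a::euclidean_space \<Rightarrow> real) \<Rightarrow> ereal" where
  "second_diff_seminorm \<psi> f = (SUP p \<in> {(x, h). 0 < norm h \<and> norm h \<le> 1}.
      ereal (\<bar>f (fst p + snd p) - 2 * f (fst p) + f (fst p - snd p)\<bar> / \<psi> (norm (snd p))))"

text \<open>The space C^psi for 1 < m_psi <= 2.\<close>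
definition C_psi :: "(real \<Rightarrow> real) \<Rightarrow> ('a::euclidean_space \<Rightarrow> real) set" where
  "C_psi \<psi> = {f. continuous_on UNIV f \<and> bounded (range f) \<and>
     (\<forall>i\<in>Basis. (\<forall>x. (\<lambda>t. f (x + t *\<^sub>R i)) differentiable (at 0)) \<and>
        continuous_on UNIV (partial f i) \<and> bounded (range (partial f i)) \<and>
        neg_seminorm \<psi> (partial f i) < \<infinity>)}"

end

theory Submission
  imports Defs
begin


lemma pow_half_powr:
  fixes b :: real
  shows "((1/2::real)^m) powr b = ((1/2) powr b)^m"
proof -
  have "((1/2::real)^m) powr b = ((1/2) powr (real m)) powr b" by (simp add: powr_realpow)
  also have "\<dots> = (1/2) powr (real m * b)" by (simp add: powr_powr)
  also have "\<dots> = ((1/2) powr b)^m" by (simp add: powr_power)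
  finally show ?thesis .
qed

locale setting =
  fixes \<psi> :: "real \<Rightarrow> real" and c \<alpha> k :: real and f :: "'a::euclidean_space \<Rightarrow> real" and i :: 'a
  assumes c: "0<c" and alpha: "1<\<alpha>"
  and inc: "\<forall>s r. 0<s \<and> s\<le>r \<and> r\<le>1 \<longrightarrow> c*(\<psi> s / s powr \<alpha>) \<le> \<psi> r / r powr \<alpha>"
  and pos: "\<forall>r. 0<r \<and> r\<le>1 \<longrightarrow> 0<\<psi> r"
  and kb: "\<forall>y w. 0<norm w \<and> norm w \<le> 1 \<longrightarrow> \<bar>f(y+w) - 2*f y + f(y-w)\<bar> \<le> k*\<psi>(norm w)"
  and k0: "0 \<le> k"
  and diff: "\<forall>x. (\<lambda>t. f (x + t *\<^sub>R i)) differentiable (at 0)"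
  and i: "norm i = 1"
begin

lemma psi_le: assumes "0<s" "s\<le>r" "r\<le>1" shows "\<psi> s \<le> (s/r) powr \<alpha> * \<psi> r / c"
proof -
  have r: "0<r" using assms by auto
  have h: "c*(\<psi> s / s powr \<alpha>) \<le> \<psi> r / r powr \<alpha>" using inc assms by auto
  have sp: "0 < s powr \<alpha>" "0 < r powr \<alpha>" using assms r by auto
  from h have "c * \<psi> s \<le> \<psi> r * s powr \<alpha> / r powr \<alpha>" using sp
    by (simp add: field_simps)
  then have "\<psi> s \<le> (\<psi> r * s powr \<alpha> / r powr \<alpha>) / c" using c by (metis mult.commute pos_le_divide_eq)
  moreover have "(\<psi> r * s powr \<alpha> / r powr \<alpha>) = (s/r) powr \<alpha> * \<psi> r" by (simp add: powr_divide)
  ultimately show ?thesis by simp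
qed

lemma G: assumes "0<r" "r\<le>1" "norm w \<le> r"
  shows "\<bar>f(y+w) - 2*f y + f(y-w)\<bar> \<le> k * \<psi> r / c"
proof (cases "w = 0")
  case True
  have "0 < \<psi> r" using pos assms by auto
  then show ?thesis using True c k0 by simp
next
  case False
  then have w: "0 < norm w" by simp
  have "\<bar>f(y+w) - 2*f y + f(y-w)\<bar> \<le> k*\<psi>(norm w)" using kb w assms by auto
  also have "\<dots> \<le> k * ((norm w/r) powr \<alpha> * \<psi> r / c)"
    by (rule mult_left_mono[OF psi_le[OF w assms(3) assms(2)] k0])
  also have "\<dots> \<le> k * (1 * \<psi> r / c)"
  proof -
    have "(norm w/r) powr \<alpha> \<le> 1" using assms alpha w by (intro powr_le1) (auto simp: divide_le_eq_1)
    moreover have "0 \<le> \<psi> r / c" using pos assms c by auto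
    ultimately have "(norm w/r) powr \<alpha> * (\<psi> r / c) \<le> 1 * (\<psi> r / c)"
      by (intro mult_right_mono) auto
    then show ?thesis using k0 by (intro mult_left_mono) auto
  qed
  finally show ?thesis by simp
qed


definition Q :: "'a \<Rightarrow> real \<Rightarrow> real" where "Q y t = (f (y + t *\<^sub>R i) - f y) / t"

lemma qstep: assumes "0<t" "2*t \<le> r" "r \<le> 1"
  shows "\<bar>Q y t - Q y (2*t)\<bar> \<le> k/(2*c) * (\<psi> r / r) * (t/r) powr (\<alpha>-1)"
proof -
  define w where "w = t *\<^sub>R i"
  define z where "z = y + w"
  have nw: "norm w = t" using i assms by (simp add: w_def)
  have e1: "y + (2*t) *\<^sub>R i = z + w" by (simp add: z_def w_def algebra_simps flip: scaleR_left_distrib)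
  have e2: "y = z - w" by (simp add: z_def)
  have "Q y t - Q y (2*t) = - (f (z+w) - 2 * f z + f (z - w)) / (2*t)"
    unfolding Q_def e1 using assms by (simp add: z_def w_def field_simps)
  then have "\<bar>Q y t - Q y (2*t)\<bar> = \<bar>f (z+w) - 2 * f z + f (z - w)\<bar> / (2*t)"
    using assms by simp
  also have "\<dots> \<le> k * \<psi> t / (2*t)"
    using kb assms nw by (intro divide_right_mono) auto
  also have "\<dots> \<le> k * ((t/r) powr \<alpha> * \<psi> r / c) / (2*t)"
    using psi_le[of t r] assms k0 by (intro divide_right_mono mult_left_mono) auto
  also have "\<dots> = k/(2*c) * (\<psi> r / r) * (t/r) powr (\<alpha>-1)"
  proof -
    have r: "0 < r" using assms by auto
    have "(t/r) powr \<alpha> = (t/r) powr (\<alpha>-1) * (t/r)"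
      using assms r by (simp add: powr_diff)
    then show ?thesis using assms r c by (simp add: field_simps)
  qed
  finally show ?thesis .
qed

lemma qseq: assumes "0<r" "r \<le> 1"
  shows "\<bar>Q y (r*(1/2)^n) - Q y r\<bar> \<le> k/(2*c) * (\<psi> r / r) * (\<Sum>j<n. ((1/2) powr (\<alpha>-1))^(Suc j))"
proof (induction n)
  case 0
  then show ?case by simp
next
  case (Suc n)
  let ?t = "r*(1/2)^(Suc n)"
  have t2: "2 * ?t = r*(1/2)^n" by simp
  have "\<bar>Q y ?t - Q y (2*?t)\<bar> \<le> k/(2*c) * (\<psi> r / r) * (?t/r) powr (\<alpha>-1)"
  proof (rule qstep)
    show "0 < ?t" using assms by simp
    have "(1/2::real)^n \<le> 1" by (simp add: power_le_one)
    then show "2 * ?t \<le> r" using assms t2 by (simp add: mult_left_le)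
  qed (use assms in auto)
  also have "(?t/r) powr (\<alpha>-1) = ((1/2) powr (\<alpha>-1))^(Suc n)"
    using assms pow_half_powr[of "Suc n" "\<alpha>-1"] by simp
  finally have "\<bar>Q y ?t - Q y (r*(1/2)^n)\<bar> \<le> k/(2*c) * (\<psi> r / r) * ((1/2) powr (\<alpha>-1))^(Suc n)"
    using t2 by simp
  with Suc.IH show ?case by (simp add: distrib_left)
qed


definition q :: real where "q = (1/2) powr (\<alpha>-1)"

lemma q: "0 < q" "q < 1"
proof -
  show "0 < q" by (simp add: q_def)
  have "(1/2::real) powr (\<alpha>-1) < (1/2) powr 0" using alpha by (intro powr_less_mono') auto
  then show "q < 1" by (simp add: q_def)
qed

lemma sumq: "(\<Sum>j<n. q^(Suc j)) \<le> q/(1-q)"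
proof -
  have "(\<Sum>j<n. q^(Suc j)) = q * (\<Sum>j<n. q^j)" by (simp add: sum_distrib_left)
  also have "\<dots> = q * ((1 - q^n)/(1-q))" using q by (simp add: sum_gp_strict)
  also have "\<dots> \<le> q * (1/(1-q))"
    using q by (intro mult_left_mono divide_right_mono) auto
  finally show ?thesis by simp
qed

lemma deriv_approx: assumes "0<r" "r \<le> 1"
  shows "\<bar>partial f i y - Q y r\<bar> \<le> k/(2*c) * (\<psi> r / r) * (q/(1-q))"
proof -
  define \<phi> where "\<phi> = (\<lambda>t. f (y + t *\<^sub>R i))"
  have "DERIV \<phi> 0 :> deriv \<phi> 0"
    using diff by (simp add: DERIV_deriv_iff_real_differentiable \<phi>_def)
  then have "DERIV \<phi> 0 :> partial f i y" by (simp add: partial_def \<phi>_def)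
  then have L: "((\<lambda>t. (\<phi> t - \<phi> 0) / (t - 0)) \<longlongrightarrow> partial f i y) (at 0)"
    by (simp add: has_field_derivative_iff)
  have L2: "(Q y \<longlongrightarrow> partial f i y) (at 0)"
    using L by (simp add: Q_def[abs_def] \<phi>_def)
  have T: "filterlim (\<lambda>n. r*(1/2::real)^n) (at 0) sequentially"
    unfolding filterlim_at
  proof
    show "\<forall>\<^sub>F n in sequentially. r*(1/2::real)^n \<in> UNIV \<and> r*(1/2)^n \<noteq> 0" using assms by simp
    have "(\<lambda>n. (1/2::real)^n) \<longlonglongrightarrow> 0" by (rule LIMSEQ_power_zero) simp
    then show "(\<lambda>n. r*(1/2::real)^n) \<longlonglongrightarrow> 0" by (rule tendsto_mult_right_zero)
  qed
  have "(\<lambda>n. Q y (r*(1/2)^n)) \<longlonglongrightarrow> partial f i y"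
    using filterlim_compose[OF L2 T] by simp
  then have "(\<lambda>n. \<bar>Q y (r*(1/2)^n) - Q y r\<bar>) \<longlonglongrightarrow> \<bar>partial f i y - Q y r\<bar>"
    by (intro tendsto_intros)
  moreover have "\<forall>n\<ge>0. \<bar>Q y (r*(1/2)^n) - Q y r\<bar> \<le> k/(2*c) * (\<psi> r / r) * (q/(1-q))"
  proof (intro allI impI)
    fix n :: nat
    have "\<bar>Q y (r*(1/2)^n) - Q y r\<bar> \<le> k/(2*c) * (\<psi> r / r) * (\<Sum>j<n. q^(Suc j))"
      using qseq[OF assms] by (simp add: q_def)
    also have "\<dots> \<le> k/(2*c) * (\<psi> r / r) * (q/(1-q))"
    proof (rule mult_left_mono[OF sumq])
      have "0 < \<psi> r" using pos assms by auto
      then show "0 \<le> k/(2*c) * (\<psi> r / r)" using k0 c assms by simp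
    qed
    finally show "\<bar>Q y (r*(1/2)^n) - Q y r\<bar> \<le> k/(2*c) * (\<psi> r / r) * (q/(1-q))" .
  qed
  ultimately show ?thesis by (intro LIMSEQ_le_const2) blast+
qed


lemma main: assumes "0 < norm h" "norm h \<le> 1"
  shows "\<bar>partial f i (x+h) - partial f i x\<bar> \<le> k*(2/c + 2*(q/(1-q)/(2*c))) * (\<psi> (norm h) / norm h)"
proof -
  define r where "r = norm h"
  have r: "0 < r" "r \<le> 1" using assms by (auto simp: r_def)
  define m where "m = x + (1/2) *\<^sub>R (h + r *\<^sub>R i)"
  define w1 where "w1 = (1/2) *\<^sub>R (h + r *\<^sub>R i)"
  define w2 where "w2 = (1/2) *\<^sub>R (h - r *\<^sub>R i)"
  have e1: "m + w1 = x + h + r *\<^sub>R i" unfolding m_def w1_def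
    by (simp add: algebra_simps flip: scaleR_left_distrib)
  have e2: "m - w1 = x" unfolding m_def w1_def by simp
  have e3: "m + w2 = x + h" unfolding m_def w2_def
    by (simp add: algebra_simps flip: scaleR_left_distrib)
  have e4: "m - w2 = x + r *\<^sub>R i" unfolding m_def w2_def
    by (simp add: algebra_simps flip: scaleR_left_distrib)
  have n1: "norm w1 \<le> r"
  proof -
    have "norm (h + r *\<^sub>R i) \<le> norm h + norm (r *\<^sub>R i)" by (rule norm_triangle_ineq)
    then show ?thesis using r i by (simp add: w1_def r_def)
  qed
  have n2: "norm w2 \<le> r"
  proof -
    have "norm (h - r *\<^sub>R i) \<le> norm h + norm (r *\<^sub>R i)" by (rule norm_triangle_ineq4)
    then show ?thesis using r i by (simp add: w2_def r_def)
  qed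
  have mixed: "Q (x+h) r - Q x r = ((f(m+w1) - 2*f m + f(m-w1)) - (f(m+w2) - 2*f m + f(m-w2))) / r"
    unfolding Q_def e1 e2 e3 e4 using r by (simp add: field_simps)
  have G1: "\<bar>f(m+w1) - 2*f m + f(m-w1)\<bar> \<le> k * \<psi> r / c" by (rule G[OF r n1])
  have G2: "\<bar>f(m+w2) - 2*f m + f(m-w2)\<bar> \<le> k * \<psi> r / c" by (rule G[OF r n2])
  have M: "\<bar>Q (x+h) r - Q x r\<bar> \<le> 2 * (k * \<psi> r / c) / r"
  proof -
    have "\<bar>(f(m+w1) - 2*f m + f(m-w1)) - (f(m+w2) - 2*f m + f(m-w2))\<bar> \<le> 2 * (k * \<psi> r / c)"
      using G1 G2 by linarith
    then have "\<bar>(f(m+w1) - 2*f m + f(m-w1)) - (f(m+w2) - 2*f m + f(m-w2))\<bar> / r \<le> 2 * (k * \<psi> r / c) / r"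
      using r by (intro divide_right_mono) auto
    then show ?thesis unfolding mixed abs_divide using r by (simp only: abs_of_pos)
  qed
  have A1: "\<bar>partial f i (x+h) - Q (x+h) r\<bar> \<le> k/(2*c) * (\<psi> r / r) * (q/(1-q))"
    by (rule deriv_approx[OF r])
  have A2: "\<bar>partial f i x - Q x r\<bar> \<le> k/(2*c) * (\<psi> r / r) * (q/(1-q))"
    by (rule deriv_approx[OF r])
  have "\<bar>partial f i (x+h) - partial f i x\<bar> \<le> 2 * (k * \<psi> r / c) / r + 2 * (k/(2*c) * (\<psi> r / r) * (q/(1-q)))"
    using M A1 A2 by linarith
  also have "\<dots> = k*(2/c + 2*(q/(1-q)/(2*c))) * (\<psi> r / r)"
    using q c r by (simp add: field_simps)
  finally show ?thesis by (simp add: r_def)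
qed

end

lemma index_ok:
  fixes \<psi> :: "real \<Rightarrow> real"
  assumes pos: "\<forall>r. 0 < r \<and> r \<le> 1 \<longrightarrow> 0 < \<psi> r"
    and one: "\<psi> 1 = 1"
    and ai: "almost_increasing (\<lambda>r. \<psi> r / r powr \<alpha>)"
    and ad: "almost_decreasing (\<lambda>r. \<psi> r / r powr \<beta>)"
  shows "\<alpha> \<le> \<beta>"
proof (rule ccontr)
  assume "\<not> \<alpha> \<le> \<beta>"
  then have ab: "0 < \<alpha> - \<beta>" by simp
  obtain c where c: "0 < c" "c \<le> 1" and ci: "\<forall>r R. 0 < r \<and> r \<le> R \<and> R \<le> 1 \<longrightarrow> c * (\<psi> r / r powr \<alpha>) \<le> \<psi> R / R powr \<alpha>"
    using ai unfolding almost_increasing_def by blast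
  obtain D where D: "1 \<le> D" and di: "\<forall>r R. 0 < r \<and> r \<le> R \<and> R \<le> 1 \<longrightarrow> \<psi> R / R powr \<beta> \<le> D * (\<psi> r / r powr \<beta>)"
    using ad unfolding almost_decreasing_def by blast
  define s where "s = (c/(2*D)) powr (1/(\<alpha>-\<beta>))"
  have cd: "0 < c/(2*D)" "c/(2*D) \<le> 1" using c D by (auto simp: field_simps)
  have s0: "0 < s" using cd c D by (simp add: s_def)
  have s1: "s \<le> 1" unfolding s_def using cd ab by (intro powr_le1) auto
  have sp: "s powr (\<alpha>-\<beta>) = c/(2*D)" unfolding s_def using cd ab c D by (simp add: powr_powr)
  have h1: "c * (\<psi> s / s powr \<alpha>) \<le> 1" using ci[rule_format, of s 1] s0 s1 one by simp
  have h2: "1 \<le> D * (\<psi> s / s powr \<beta>)" using di[rule_format, of s 1] s0 s1 one by simp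
  have ps: "0 < \<psi> s" using pos s0 s1 by auto
  have "\<psi> s \<le> s powr \<alpha> / c" using h1 c s0 by (simp add: field_simps)
  moreover have "s powr \<beta> / D \<le> \<psi> s" using h2 D s0 by (simp add: field_simps)
  ultimately have "s powr \<beta> / D \<le> s powr \<alpha> / c" by linarith
  then have "c / D \<le> s powr \<alpha> / s powr \<beta>" using c D s0 by (simp add: field_simps)
  also have "\<dots> = c/(2*D)" using sp by (simp add: powr_diff)
  finally show False using c D by (simp add: field_simps)
qed

theorem lemma2p4:
  fixes \<psi> :: "real \<Rightarrow> real"
  assumes "\<forall>r. 0 < r \<and> r \<le> 1 \<longrightarrow> 0 < \<psi> r"
    and "\<psi> 1 = 1"
    and "(\<psi> \<longlongrightarrow> 0) (at_right 0)"
    and "index_interval \<psi> \<subseteq> {ereal 1 <..< ereal 2}"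
  shows "\<exists>C::real. 0 < C \<and> (\<forall>(f::'a::euclidean_space \<Rightarrow> real) \<in> C_psi \<psi>. \<forall>i\<in>Basis.
           neg_seminorm \<psi> (partial f i)
             \<le> ereal C * (ereal (sup_norm f) + second_diff_seminorm \<psi> f))"
proof -
  note pos = assms(1)
  have le: "lower_index \<psi> \<le> upper_index \<psi>"
    unfolding lower_index_def upper_index_def
    using index_ok[OF assms(1,2)] by (auto intro!: Sup_least Inf_greatest)
  then have "lower_index \<psi> \<in> index_interval \<psi>" by (simp add: index_interval_def)
  with assms(4) have "ereal 1 < lower_index \<psi>" by auto
  then obtain a where "a \<in> {ereal \<alpha> | \<alpha>. almost_increasing (\<lambda>r. \<psi> r / r powr \<alpha>)}" "ereal 1 < a"
    unfolding lower_index_def by (auto simp: less_Sup_iff)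
  then obtain \<alpha> where alpha: "1 < \<alpha>" and ai: "almost_increasing (\<lambda>r. \<psi> r / r powr \<alpha>)" by auto
  obtain c where c: "0 < c" and inc: "\<forall>s r. 0<s \<and> s\<le>r \<and> r\<le>1 \<longrightarrow> c*(\<psi> s / s powr \<alpha>) \<le> \<psi> r / r powr \<alpha>"
    using ai unfolding almost_increasing_def by blast
  define q where "q = (1/2::real) powr (\<alpha>-1)"
  define C where "C = 2/c + 2*(q/(1-q)/(2*c))"
  have q: "0 < q" "q < 1"
  proof -
    show "0 < q" by (simp add: q_def)
    have "(1/2::real) powr (\<alpha>-1) < (1/2) powr 0" using alpha by (intro powr_less_mono') auto
    then show "q < 1" by (simp add: q_def)
  qed
  have C0: "0 < C" unfolding C_def using q c by (intro add_pos_nonneg) auto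
  show ?thesis
  proof (intro exI conjI ballI)
    show "0 < C" by (rule C0)
    fix f :: "'a \<Rightarrow> real" and i :: 'a
    assume f: "f \<in> C_psi \<psi>" and i: "i \<in> Basis"
    have ni: "norm i = 1" using i by simp
    have diff: "\<forall>x. (\<lambda>t. f (x + t *\<^sub>R i)) differentiable (at 0)" using f i by (simp add: C_psi_def)
    have bd: "bounded (range f)" using f by (simp add: C_psi_def)
    then obtain B where B: "\<forall>x. \<bar>f x\<bar> \<le> B" unfolding bounded_iff by auto
    have M0: "0 \<le> sup_norm f"
    proof -
      have "bdd_above (range (\<lambda>x. \<bar>f x\<bar>))" using B by (auto intro: bdd_aboveI)
      then have "\<bar>f 0\<bar> \<le> sup_norm f" unfolding sup_norm_def using cSUP_upper[of 0 UNIV "\<lambda>x. \<bar>f x\<bar>"] by simp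
      then show ?thesis by linarith
    qed
    define K where "K = second_diff_seminorm \<psi> f"
    have Kge: "0 \<le> K"
    proof -
      have "(0, i) \<in> {(x, h). 0 < norm h \<and> norm (h::'a) \<le> 1}" using ni i nonzero_Basis by auto
      then have "ereal (\<bar>f (0 + i) - 2 * f 0 + f (0 - i)\<bar> / \<psi> (norm i)) \<le> K"
        unfolding K_def second_diff_seminorm_def by (rule SUP_upper2) simp
      moreover have "0 \<le> ereal (\<bar>f (0 + i) - 2 * f 0 + f (0 - i)\<bar> / \<psi> (norm i))"
        using assms(2) ni by simp
      ultimately show ?thesis by (rule order.trans[rotated])
    qed
    show "neg_seminorm \<psi> (partial f i) \<le> ereal C * (ereal (sup_norm f) + second_diff_seminorm \<psi> f)"
    proof (cases K)
      case PInf
      then show ?thesis using C0 by (simp add: K_def[symmetric])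
    next
      case MInf
      then show ?thesis using Kge by simp
    next
      case (real k)
      have k0: "0 \<le> k" using Kge real by simp
      have kb: "\<forall>y w. 0<norm w \<and> norm w \<le> 1 \<longrightarrow> \<bar>f(y+w) - 2*f y + f(y-w)\<bar> \<le> k*\<psi>(norm w)"
      proof (intro allI impI)
        fix y w :: 'a assume w: "0<norm w \<and> norm w \<le> 1"
        then have "(y, w) \<in> {(x, h). 0 < norm h \<and> norm (h::'a) \<le> 1}" by simp
        then have "ereal (\<bar>f (y + w) - 2 * f y + f (y - w)\<bar> / \<psi> (norm w)) \<le> K"
          unfolding K_def second_diff_seminorm_def by (rule SUP_upper2) simp
        then have "\<bar>f (y + w) - 2 * f y + f (y - w)\<bar> / \<psi> (norm w) \<le> k" using real by simp
        moreover have "0 < \<psi> (norm w)" using pos w by auto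
        ultimately show "\<bar>f(y+w) - 2*f y + f(y-w)\<bar> \<le> k*\<psi>(norm w)" by (simp add: field_simps)
      qed
      interpret S: setting \<psi> c \<alpha> k f i
        using c alpha inc pos kb k0 diff ni by unfold_locales auto
      have Sq: "S.q = q" by (simp add: S.q_def q_def)
      have "ereal C * (ereal (sup_norm f) + second_diff_seminorm \<psi> f) = ereal (C * (sup_norm f + k))"
        using real by (simp add: K_def[symmetric])
      moreover have "neg_seminorm \<psi> (partial f i) \<le> ereal (C * (sup_norm f + k))"
        unfolding neg_seminorm_def
      proof (rule SUP_least)
        fix p :: "'a \<times> 'a" assume "p \<in> {(x, h). 0 < norm h \<and> norm (h::'a) \<le> 1}"
        then obtain x h where p: "p = (x, h)" and h: "0 < norm h" "norm h \<le> 1" by auto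
        have ps: "0 < \<psi> (norm h)" using pos h by auto
        have "\<bar>partial f i (x+h) - partial f i x\<bar> \<le> k * C * (\<psi> (norm h) / norm h)"
          using S.main[OF h] by (simp add: Sq C_def)
        then have "\<bar>partial f i (x+h) - partial f i x\<bar> / (\<psi> (norm h) * inverse (norm h)) \<le> k * C"
          using ps h by (simp add: field_simps)
        also have "\<dots> \<le> C * (sup_norm f + k)" using M0 C0 by (simp add: field_simps)
        finally show "ereal (\<bar>partial f i (fst p + snd p) - partial f i (fst p)\<bar> / (\<psi> (norm (snd p)) * inverse (norm (snd p)))) \<le> ereal (C * (sup_norm f + k))"
          using p by simp
      qed
      ultimately show ?thesis by simp
    qed
  qed
qed

end
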